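(* There is a family of matrices $C_{n}$, called Chet matrices, for which $\sum_{i}C_{n}(i,j)=1$ and $\sum_{j}C_{n}(i,j)=1$ for all $i,j$, and if $\phi(C_{n})$ is defined as for doubly stochastic matrices, \[ \phi(C_n)=\min_{S\subseteq[n],\,|S|\leq n/2}\frac{\sum\limits _{i\in S,j\in\overline{S}}C_{n}(i,j)}{|S|}, \] then for all $n$, \[ \phi(C_{n})\leq 2\cdot\dfrac{\Delta(C_{n})}{n}. \]
   Context: For an $n\times n$ matrix $R$ whose eigenvalues are ordered as $\lambda_{1}>\text{Re}\lambda_{2}\geq\dots\geq\text{Re}\lambda_{n}$ with $\lambda_1$ real positive, the spectral gap is $\Delta(R)=1-\text{Re}\lambda_{2}(R)/\lambda_{1}(R)$. The Chet matrix $C_n$ is the $n\times n$ matrix with: $C_n(i,i+1)=r$ for $1\leq i\leq n-1$; first column $C_n(i,1)=b_{i-1}$ for $1\leq i\leq n$; last row $C_n(n,j)=b_{n-j}$ for $1\leq j\leq n$; $C_n(i,j)=c_{i-j}$ for $2\leq j\leq i\leq n-1$; all other entries $0$. Here $b_i=1-r-\sum_{j=0}^{i-1}c_j$ for $0\leq i\leq n-2$ and $b_{n-1}=1-\sum_{i=0}^{n-2}b_i$. For $k=0,\dots,n-3$, inductively, $c_k$ is set (as a function of $r$) so that $\text{Tr}(C_n^{k+1})=1$; explicitly, $c_{k}=\dfrac{1-\text{Tr}(C_{n}|_{k})^{k+1}}{(n-k-2)(k+1)r^{k}}$, where $C_n|_k$ has the structure of $C_n$ with all $c_l$, $l\geq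 k$, and all $b_l$, $l\geq k+1$, set to $0$. Finally $r=(1/n)^{1/(n-1)}$. *)

theory Defs
  imports "Jordan_Normal_Form.Char_Poly" "HOL-Computational_Algebra.Polynomial" Complex_Main
begin

definition mtrace :: "'a::comm_ring_1 mat \<Rightarrow> 'a" where
  "mtrace A = (\<Sum>i<dim_row A. A $$ (i,i))"

definition cspec :: "real mat \<Rightarrow> complex multiset" where
  "cspec R = proots (char_poly (map_mat complex_of_real R))"

(* lambda_1: the eigenvalue with largest real part (assumed real positive, as in the paper). *)
definition lambda1 :: "real mat \<Rightarrow> real" where
  "lambda1 R = Max (Re ` set_mset (cspec R))"

(* Re lambda_2: largest real part among the remaining eigenvalues (one copy of lambda_1 removed). *)
definition re_lambda2 :: "real mat \<Rightarrow> real" where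
  "re_lambda2 R = Max (Re ` set_mset (cspec R - {# complex_of_real (lambda1 R) #}))"

definition spectral_gap :: "real mat \<Rightarrow> real" where
  "spectral_gap R = 1 - re_lambda2 R / lambda1 R"

definition chet_pattern :: "nat \<Rightarrow> real \<Rightarrow> (nat \<Rightarrow> real) \<Rightarrow> (nat \<Rightarrow> real) \<Rightarrow> nat \<Rightarrow> nat \<Rightarrow> real" where
  "chet_pattern n r c b i j =
     (if 1 \<le> i \<and> i \<le> n - 1 \<and> j = i + 1 then r
      else if 1 \<le> i \<and> i \<le> n \<and> j = 1 then b (i - 1)
      else if i = n \<and> 1 \<le> j \<and> j \<le> n then b (n - j)
      else if 2 \<le> j \<and> j \<le> i \<and> i \<le> n - 1 then c (i - j)
      else 0)"

(* As an n x n matrix (0-based storage of the 1-based entries). *)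
definition chet_mat :: "nat \<Rightarrow> real \<Rightarrow> (nat \<Rightarrow> real) \<Rightarrow> (nat \<Rightarrow> real) \<Rightarrow> real mat" where
  "chet_mat n r c b = mat n n (\<lambda>(i,j). chet_pattern n r c b (i+1) (j+1))"

definition chet_r :: "nat \<Rightarrow> real" where
  "chet_r n = (1 / real n) powr (1 / (real n - 1))"

definition c_of :: "real list \<Rightarrow> nat \<Rightarrow> real" where
  "c_of cl l = (if l < length cl then cl ! l else 0)"

definition b_formula :: "real \<Rightarrow> (nat \<Rightarrow> real) \<Rightarrow> nat \<Rightarrow> real" where
  "b_formula r c i = 1 - r - (\<Sum>j<i. c j)"

definition chet_trunc :: "nat \<Rightarrow> real list \<Rightarrow> real mat" where
  "chet_trunc n cl =
     (let k = length cl; r = chet_r n; c = c_of cl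
      in chet_mat n r c (\<lambda>l. if l \<le> k then b_formula r c l else 0))"

definition c_next :: "nat \<Rightarrow> real list \<Rightarrow> real" where
  "c_next n cl =
     (let k = length cl
      in (1 - mtrace (chet_trunc n cl ^\<^sub>m (k+1)))
           / ((real n - real k - 2) * (real k + 1) * chet_r n ^ k))"

fun chet_cs :: "nat \<Rightarrow> nat \<Rightarrow> real list" where
  "chet_cs n 0 = []"
| "chet_cs n (Suc k) = chet_cs n k @ [c_next n (chet_cs n k)]"

definition chet_c :: "nat \<Rightarrow> nat \<Rightarrow> real" where
  "chet_c n = c_of (chet_cs n (n - 2))"

definition chet_b :: "nat \<Rightarrow> nat \<Rightarrow> real" where
  "chet_b n i =
     (if i \<le> n - 2 then b_formula (chet_r n) (chet_c n) i
      else if i = n - 1 then 1 - (\<Sum>l\<le>n-2. b_formula (chet_r n) (chet_c n) l)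
      else 0)"

definition chet :: "nat \<Rightarrow> real mat" where
  "chet n = chet_mat n (chet_r n) (chet_c n) (chet_b n)"

(* phi(R), with 1-based index set [n] = {1..n}; entry R(i,j) stored at (i-1,j-1) *)
definition phi :: "real mat \<Rightarrow> real" where
  "phi R = (let n = dim_row R in
     Min ((\<lambda>S. (\<Sum>i\<in>S. \<Sum>j\<in>{1..n} - S. R $$ (i-1, j-1)) / real (card S))
          ` {S. S \<subseteq> {1..n} \<and> S \<noteq> {} \<and> real (card S) \<le> real n / 2}))"

end

theory Submission
  imports Defs "Jordan_Normal_Form.Schur_Decomposition" "HOL-Computational_Algebra.Polynomial_FPS"
begin

lemma mult_entry:
  assumes "A \<in> carrier_mat n n" "B \<in> carrier_mat n n" "i < n" "j < n"
  shows "(A * B) $$ (i,j) = (\<Sum>l<n. A $$ (i,l) * B $$ (l,j))"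
  using assms by (auto simp: scalar_prod_def lessThan_atLeast0 intro!: sum.cong)

definition band :: "'a::zero mat \<Rightarrow> int \<Rightarrow> bool" where
  "band A d \<longleftrightarrow> (\<forall>i<dim_row A. \<forall>j<dim_col A. int j - int i > d \<longrightarrow> A $$ (i,j) = 0)"

lemma band_mult:
  fixes A B :: "'a::comm_ring_1 mat"
  assumes A: "A \<in> carrier_mat n n" and B: "B \<in> carrier_mat n n" and a: "band A a" and b: "band B b"
  shows "band (A * B) (a + b)"
  unfolding band_def
proof (intro allI impI)
  fix i j assume i: "i < dim_row (A*B)" and j: "j < dim_col (A*B)" and ij: "int j - int i > a + b"
  have "(A*B) $$ (i,j) = (\<Sum>l<n. A $$ (i,l) * B $$ (l,j))" using A B i j by (intro mult_entry) auto
  also have "\<dots> = 0"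
  proof (rule sum.neutral, intro ballI)
    fix l assume l: "l \<in> {..<n}"
    show "A $$ (i,l) * B $$ (l,j) = 0"
    proof (cases "int l - int i > a")
      case True then show ?thesis using a A B i l unfolding band_def by auto
    next
      case False then have "int j - int l > b" using ij by linarith
      then show ?thesis using b A B j l unfolding band_def by auto
    qed
  qed
  finally show "(A*B) $$ (i,j) = 0" .
qed

lemma band_mono: "band A a \<Longrightarrow> a \<le> b \<Longrightarrow> band A b"
  unfolding band_def by force

lemma band_one: "band (1\<^sub>m n :: 'a::comm_ring_1 mat) 0"
  unfolding band_def by auto

lemma band_pow:
  fixes A :: "'a::comm_ring_1 mat"
  assumes A: "A \<in> carrier_mat n n" and a: "band A 1"
  shows "band (A ^\<^sub>m m) (int m)"
proof (induction m)
  case 0 then show ?case using A band_one[of n] by auto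
next
  case (Suc m)
  have "band (A ^\<^sub>m m * A) (int m + 1)" by (rule band_mult[OF _ A Suc a]) (use A in auto)
  then show ?case by (simp add: add.commute)
qed

lemma band_minus:
  fixes A B :: "'a::comm_ring_1 mat"
  assumes A: "A \<in> carrier_mat n n" and B: "B \<in> carrier_mat n n" and a: "band A a" and b: "band B a"
  shows "band (A - B) a"
  using assms unfolding band_def by auto

lemma band_zero: "band (0\<^sub>m n n :: 'a::comm_ring_1 mat) a"
  unfolding band_def by auto

lemma trace_band_neg:
  fixes A :: "'a::comm_ring_1 mat"
  assumes "A \<in> carrier_mat n n" "band A (-1)"
  shows "mtrace A = 0"
  using assms unfolding mtrace_def band_def by (auto intro!: sum.neutral)

lemma trace_comm:
  fixes A B :: "'a::comm_ring_1 mat"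
  assumes A: "A \<in> carrier_mat n n" and B: "B \<in> carrier_mat n n"
  shows "mtrace (A * B) = mtrace (B * A)"
proof -
  have d: "dim_row (A*B) = n" "dim_row (B*A) = n" using A B by auto
  have "mtrace (A * B) = (\<Sum>i<n. \<Sum>l<n. A $$ (i,l) * B $$ (l,i))"
    unfolding mtrace_def d using A B by (auto simp: mult_entry[OF A B] simp del: index_mult_mat intro!: sum.cong)
  also have "\<dots> = (\<Sum>l<n. \<Sum>i<n. B $$ (l,i) * A $$ (i,l))"
    by (subst sum.swap) (simp add: mult.commute)
  also have "\<dots> = mtrace (B * A)"
    unfolding mtrace_def d using A B by (auto simp: mult_entry[OF B A] simp del: index_mult_mat intro!: sum.cong)
  finally show ?thesis .
qed

lemma band_entry:
  fixes A B :: "'a::comm_ring_1 mat"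
  assumes A: "A \<in> carrier_mat n n" and B: "B \<in> carrier_mat n n"
    and a: "band A (int a)" and b: "band B (int b)" and i: "i + a + b < n"
  shows "(A * B) $$ (i, i+a+b) = A $$ (i, i+a) * B $$ (i+a, i+a+b)"
proof -
  have "(A*B) $$ (i,i+a+b) = (\<Sum>l<n. A $$ (i,l) * B $$ (l,i+a+b))" using A B i by (intro mult_entry) auto
  also have "\<dots> = A $$ (i, i+a) * B $$ (i+a, i+a+b)"
  proof (rule sum.remove[THEN trans])
    show "i + a \<in> {..<n}" using i by auto
    have "(\<Sum>l\<in>{..<n} - {i+a}. A $$ (i,l) * B $$ (l,i+a+b)) = 0"
    proof (rule sum.neutral, intro ballI)
      fix l assume l: "l \<in> {..<n} - {i+a}"
      show "A $$ (i,l) * B $$ (l,i+a+b) = 0"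
      proof (cases "l > i + a")
        case True then show ?thesis using a A B i l unfolding band_def by auto
      next
        case False then have "l < i + a" using l by auto
        then show ?thesis using b A B i l unfolding band_def by auto
      qed
    qed
    then show "A $$ (i, i+a) * B $$ (i+a, i+a+b) + (\<Sum>l\<in>{..<n} - {i+a}. A $$ (i,l) * B $$ (l,i+a+b)) = A $$ (i, i+a) * B $$ (i+a, i+a+b)" by simp
  qed auto
  finally show ?thesis .
qed

lemma pow_superdiag:
  fixes A :: "'a::comm_ring_1 mat"
  assumes A: "A \<in> carrier_mat n n" and a: "band A 1" and sd: "\<And>l. l + 1 < n \<Longrightarrow> A $$ (l, l+1) = r"
  shows "i + m < n \<Longrightarrow> (A ^\<^sub>m m) $$ (i, i+m) = r ^ m"
proof (induction m)
  case 0 then show ?case using A by auto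
next
  case (Suc m)
  have "(A ^\<^sub>m m * A) $$ (i, i+m+1) = (A ^\<^sub>m m) $$ (i, i+m) * A $$ (i+m, i+m+1)"
    by (rule band_entry[OF _ A band_pow[OF A a]]) (use A a Suc.prems in auto)
  then show ?case using Suc sd[of "i+m"] by (simp add: mult.commute)
qed


lemma pow_mat_add:
  fixes A :: "'a::comm_ring_1 mat"
  assumes A: "A \<in> carrier_mat n n"
  shows "A ^\<^sub>m (a + b) = A ^\<^sub>m a * A ^\<^sub>m b"
proof (induction b)
  case 0 then show ?case using A by simp
next
  case (Suc b)
  have "A ^\<^sub>m (a + Suc b) = A ^\<^sub>m a * A ^\<^sub>m b * A" using Suc by simp
  also have "\<dots> = A ^\<^sub>m a * (A ^\<^sub>m b * A)" using A by (simp add: assoc_mult_mat[of _ n n _ n _ n])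
  finally show ?case by simp
qed

lemma mtrace_add:
  fixes X Y :: "'a::comm_ring_1 mat"
  assumes "X \<in> carrier_mat n n" "Y \<in> carrier_mat n n"
  shows "mtrace (X + Y) = mtrace X + mtrace Y"
  using assms unfolding mtrace_def by (auto simp: sum.distrib)

lemma trace_perturb:
  fixes A B :: "'a::comm_ring_1 mat"
  assumes A: "A \<in> carrier_mat n n" and B: "B \<in> carrier_mat n n"
    and bA: "band A 1" and bB: "band B 1" and bD: "band (A - B) (- int k)"
  shows "mtrace (A ^\<^sub>m (k+1)) = mtrace (B ^\<^sub>m (k+1)) + of_nat (k+1) * mtrace ((A - B) * B ^\<^sub>m k)"
proof -
  define D where "D = A - B"
  have D: "D \<in> carrier_mat n n" using A B unfolding D_def by auto
  have AD: "A = B + D" using A B unfolding D_def by auto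
  have bD': "band D (- int k)" using bD unfolding D_def .
  define E where "E a = A ^\<^sub>m a - B ^\<^sub>m a" for a
  have E: "E a \<in> carrier_mat n n" for a using A B unfolding E_def by auto
  have bE: "band (E a) (int a - 1 - int k)" for a
  proof (induction a)
    case 0 show ?case using A B unfolding E_def by (auto simp: band_def)
  next
    case (Suc a)
    have eq: "E (Suc a) = A ^\<^sub>m a * D + E a * B"
    proof -
      have Aa: "A ^\<^sub>m a \<in> carrier_mat n n" "B ^\<^sub>m a \<in> carrier_mat n n" using A B by auto
      have "A ^\<^sub>m a * D + E a * B = (A ^\<^sub>m a * A - A ^\<^sub>m a * B) + (A ^\<^sub>m a * B - B ^\<^sub>m a * B)"
        unfolding D_def E_def
        by (simp add: mult_minus_distrib_mat[OF Aa(1) A B] minus_mult_distrib_mat[OF Aa B])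
      also have "\<dots> = E (Suc a)" unfolding E_def using A B by (intro eq_matI) auto
      finally show ?thesis by simp
    qed
    have b1: "band (A ^\<^sub>m a * D) (int a + - int k)"
      by (rule band_mult[OF _ D band_pow[OF A bA] bD']) (use A in auto)
    have b2: "band (E a * B) (int a - 1 - int k + 1)"
      by (rule band_mult[OF E B Suc bB])
    have "band (A ^\<^sub>m a * D + E a * B) (int (Suc a) - 1 - int k)"
      using b1 b2 A B D E[of a] unfolding band_def by auto
    then show ?case using eq by simp
  qed
  have step: "mtrace (A ^\<^sub>m a * D * B ^\<^sub>m (k - a)) = mtrace (D * B ^\<^sub>m k)" if a: "a \<le> k" for a
  proof -
    have Aa: "A ^\<^sub>m a = B ^\<^sub>m a + E a" using A B unfolding E_def by auto
    have "A ^\<^sub>m a * D * B ^\<^sub>m (k - a) = B ^\<^sub>m a * D * B ^\<^sub>m (k - a) + E a * D * B ^\<^sub>m (k - a)"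
      unfolding Aa using A B D E[of a]
      by (simp add: add_mult_distrib_mat[of _ n n _ _ n])
         (rule add_mult_distrib_mat[of _ n n], auto)
    moreover have "mtrace (E a * D * B ^\<^sub>m (k - a)) = 0"
    proof (rule trace_band_neg)
      show "E a * D * B ^\<^sub>m (k - a) \<in> carrier_mat n n" using D E[of a] B by auto
      have bED: "band (E a * D) (int a - 1 - int k + - int k)" by (rule band_mult[OF E D bE bD'])
      have "band (E a * D * B ^\<^sub>m (k - a)) (int a - 1 - int k + - int k + int (k - a))"
        by (rule band_mult[OF _ _ bED band_pow[OF B bB]]) (use D E[of a] B in auto)
      then show "band (E a * D * B ^\<^sub>m (k - a)) (-1)" by (rule band_mono) (use a in auto)
    qed
    moreover have "mtrace (B ^\<^sub>m a * D * B ^\<^sub>m (k - a)) = mtrace (D * B ^\<^sub>m k)"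
    proof -
      have "mtrace (B ^\<^sub>m a * D * B ^\<^sub>m (k - a)) = mtrace (B ^\<^sub>m a * (D * B ^\<^sub>m (k - a)))"
        using B D by (simp add: assoc_mult_mat[of _ n n _ n _ n])
      also have "\<dots> = mtrace ((D * B ^\<^sub>m (k - a)) * B ^\<^sub>m a)"
        by (rule trace_comm[of _ n]) (use B D in auto)
      also have "\<dots> = mtrace (D * (B ^\<^sub>m (k - a) * B ^\<^sub>m a))"
        using B D by (simp add: assoc_mult_mat[of _ n n _ n _ n])
      also have "B ^\<^sub>m (k - a) * B ^\<^sub>m a = B ^\<^sub>m k"
        using pow_mat_add[OF B, of "k-a" a] a by simp
      finally show ?thesis .
    qed
    moreover have "B ^\<^sub>m a * D * B ^\<^sub>m (k - a) \<in> carrier_mat n n" "E a * D * B ^\<^sub>m (k - a) \<in> carrier_mat n n"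
      using B D E[of a] by auto
    ultimately show ?thesis
      using mtrace_add[of "B ^\<^sub>m a * D * B ^\<^sub>m (k - a)" n "E a * D * B ^\<^sub>m (k - a)"] by simp
  qed
  have main: "mtrace (A ^\<^sub>m a * B ^\<^sub>m (k + 1 - a)) = mtrace (B ^\<^sub>m (k+1)) + of_nat a * mtrace (D * B ^\<^sub>m k)"
    if "a \<le> k + 1" for a
    using that
  proof (induction a)
    case 0 then show ?case using A B by simp
  next
    case (Suc a)
    then have a: "a \<le> k" by simp
    have kk: "k + 1 - a = Suc (k - a)" using a by simp
    have "A ^\<^sub>m (Suc a) * B ^\<^sub>m (k + 1 - Suc a) = A ^\<^sub>m a * (B + D) * B ^\<^sub>m (k - a)"
      using AD by simp
    also have "\<dots> = A ^\<^sub>m a * B ^\<^sub>m (k + 1 - a) + A ^\<^sub>m a * D * B ^\<^sub>m (k - a)"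
    proof -
      have "A ^\<^sub>m a * (B + D) = A ^\<^sub>m a * B + A ^\<^sub>m a * D"
        using A B D by (simp add: mult_add_distrib_mat[of _ n n])
      moreover have "(A ^\<^sub>m a * B + A ^\<^sub>m a * D) * B ^\<^sub>m (k - a) = A ^\<^sub>m a * B * B ^\<^sub>m (k - a) + A ^\<^sub>m a * D * B ^\<^sub>m (k - a)"
        using A B D by (intro add_mult_distrib_mat[of _ n n]) auto
      moreover have "A ^\<^sub>m a * B * B ^\<^sub>m (k - a) = A ^\<^sub>m a * B ^\<^sub>m (k + 1 - a)"
      proof -
        have "B * B ^\<^sub>m (k - a) = B ^\<^sub>m (k + 1 - a)"
          using pow_mat_add[OF B, of 1 "k-a"] B kk by (simp add: add.commute)
        then show ?thesis using A B by (simp add: assoc_mult_mat[of _ n n _ n _ n])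
      qed
      ultimately show ?thesis by simp
    qed
    finally have eq: "A ^\<^sub>m (Suc a) * B ^\<^sub>m (k + 1 - Suc a) = A ^\<^sub>m a * B ^\<^sub>m (k + 1 - a) + A ^\<^sub>m a * D * B ^\<^sub>m (k - a)" .
    have "mtrace (A ^\<^sub>m (Suc a) * B ^\<^sub>m (k + 1 - Suc a)) = mtrace (A ^\<^sub>m a * B ^\<^sub>m (k + 1 - a)) + mtrace (A ^\<^sub>m a * D * B ^\<^sub>m (k - a))"
      unfolding eq using A B D by (intro mtrace_add[of _ n]) auto
    then show ?case using Suc step[OF a] by (simp add: algebra_simps)
  qed
  from main[of "k+1"] show ?thesis using A B unfolding D_def by simp
qed


lemma bandD: "band A d \<Longrightarrow> A \<in> carrier_mat n m \<Longrightarrow> i < n \<Longrightarrow> j < m \<Longrightarrow> int j - int i > d \<Longrightarrow> A $$ (i,j) = 0"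
  unfolding band_def by auto

lemma trace_shift:
  fixes B D :: "'a::comm_ring_1 mat"
  assumes B: "B \<in> carrier_mat n n" and D: "D \<in> carrier_mat n n"
    and bB: "band B 1" and bD: "band D (- int k)"
    and sd: "\<And>l. l + 1 < n \<Longrightarrow> B $$ (l, l+1) = r"
  shows "mtrace (D * B ^\<^sub>m k) = r ^ k * (\<Sum>j<n-k. D $$ (j+k, j))"
proof -
  have Bk: "B ^\<^sub>m k \<in> carrier_mat n n" using B by auto
  have bBk: "band (B ^\<^sub>m k) (int k)" by (rule band_pow[OF B bB])
  have "mtrace (D * B ^\<^sub>m k) = mtrace (B ^\<^sub>m k * D)" by (rule trace_comm[OF D Bk])
  also have "\<dots> = (\<Sum>j<n. (B ^\<^sub>m k * D) $$ (j,j))" unfolding mtrace_def using B by simp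
  also have "\<dots> = (\<Sum>j<n. if j + k < n then r ^ k * D $$ (j+k, j) else 0)"
  proof (rule sum.cong[OF refl])
    fix j assume j: "j \<in> {..<n}"
    have "(B ^\<^sub>m k * D) $$ (j,j) = (\<Sum>l<n. (B ^\<^sub>m k) $$ (j,l) * D $$ (l,j))"
      using j by (intro mult_entry[OF Bk D]) auto
    also have "\<dots> = (if j + k < n then r ^ k * D $$ (j+k, j) else 0)"
    proof (cases "j + k < n")
      case True
      have "(\<Sum>l<n. (B ^\<^sub>m k) $$ (j,l) * D $$ (l,j)) = (B ^\<^sub>m k) $$ (j,j+k) * D $$ (j+k,j)
          + (\<Sum>l\<in>{..<n} - {j+k}. (B ^\<^sub>m k) $$ (j,l) * D $$ (l,j))"
        by (rule sum.remove) (use True in auto)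
      also have "(\<Sum>l\<in>{..<n} - {j+k}. (B ^\<^sub>m k) $$ (j,l) * D $$ (l,j)) = 0"
      proof (rule sum.neutral, intro ballI)
        fix l assume l: "l \<in> {..<n} - {j+k}"
        show "(B ^\<^sub>m k) $$ (j,l) * D $$ (l,j) = 0"
        proof (cases "l > j + k")
          case True then show ?thesis using bandD[OF bBk Bk, of j l] j l by auto
        next
          case False then have "l < j + k" using l by auto
          then show ?thesis using bandD[OF bD D, of l j] j l by auto
        qed
      qed
      also have "(B ^\<^sub>m k) $$ (j,j+k) = r ^ k" by (rule pow_superdiag[OF B bB sd True])
      finally show ?thesis using True by simp
    next
      case False
      show ?thesis
      proof (simp add: False, rule sum.neutral, intro ballI)
        fix l assume l: "l \<in> {..<n}"
        show "(B ^\<^sub>m k) $$ (j,l) * D $$ (l,j) = 0"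
        proof (cases "l > j + k")
          case True then show ?thesis using bandD[OF bBk Bk, of j l] j l by auto
        next
          case False then have "l < j + k" using l \<open>\<not> j + k < n\<close> by auto
          then show ?thesis using bandD[OF bD D, of l j] j l by auto
        qed
      qed
    qed
    finally show "(B ^\<^sub>m k * D) $$ (j,j) = (if j + k < n then r ^ k * D $$ (j+k, j) else 0)" .
  qed
  also have "\<dots> = (\<Sum>j\<in>{..<n-k}. r ^ k * D $$ (j+k, j))"
    by (rule sum.mono_neutral_cong_right) auto
  also have "\<dots> = r ^ k * (\<Sum>j<n-k. D $$ (j+k, j))" by (simp add: sum_distrib_left)
  finally show ?thesis .
qed


lemma chet_cs_length[simp]: "length (chet_cs n k) = k"
  by (induction k) auto

lemma chet_cs_nth: "l < m \<Longrightarrow> chet_cs n m ! l = c_next n (chet_cs n l)"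
proof (induction m)
  case 0 then show ?case by simp
next
  case (Suc m) then show ?case by (cases "l = m") (auto simp: nth_append)
qed

lemma c_of_chet_cs: "l < k \<Longrightarrow> k \<le> m \<Longrightarrow> c_of (chet_cs n m) l = c_of (chet_cs n k) l"
  unfolding c_of_def by (auto simp: chet_cs_nth)

lemma chet_mat_carrier[simp]: "chet_mat n r c b \<in> carrier_mat n n"
  unfolding chet_mat_def by auto

lemma chet_mat_dims[simp]: "dim_row (chet_mat n r c b) = n" "dim_col (chet_mat n r c b) = n"
  unfolding chet_mat_def by auto

lemma chet_mat_index: "i < n \<Longrightarrow> j < n \<Longrightarrow> chet_mat n r c b $$ (i,j) = chet_pattern n r c b (i+1) (j+1)"
  unfolding chet_mat_def by auto

lemma chet_mat_band: "band (chet_mat n r c b) 1"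
  unfolding band_def chet_mat_def chet_pattern_def by auto

lemma chet_mat_sd: "l + 1 < n \<Longrightarrow> chet_mat n r c b $$ (l, l+1) = r"
  unfolding chet_mat_def chet_pattern_def by auto

lemma chet_mat_diff_band:
  assumes c: "\<And>d. d < k \<Longrightarrow> c d = c' d" and b: "\<And>d. d < k \<Longrightarrow> b d = b' d"
  shows "band (chet_mat n r c b - chet_mat n r c' b') (- int k)"
  unfolding band_def
proof (intro allI impI)
  fix i j assume i: "i < dim_row (chet_mat n r c b - chet_mat n r c' b')"
    and j: "j < dim_col (chet_mat n r c b - chet_mat n r c' b')" and ij: "- int k < int j - int i"
  have i': "i < n" and j': "j < n" using i j by auto
  have "chet_pattern n r c b (i+1) (j+1) = chet_pattern n r c' b' (i+1) (j+1)"
    unfolding chet_pattern_def using c[of "i - j"] b[of i] b[of "n - (j+1)"] ij i' j'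
    by (auto)
  then show "(chet_mat n r c b - chet_mat n r c' b') $$ (i, j) = 0"
    using i' j' by (simp add: chet_mat_index)
qed

lemma chet_mat_diff_sum:
  assumes k: "k + 2 < n" and b: "b k = b' k"
  shows "(\<Sum>j<n-k. (chet_mat n r c b - chet_mat n r c' b') $$ (j+k, j)) = real (n - k - 2) * (c k - c' k)"
proof -
  have "(\<Sum>j<n-k. (chet_mat n r c b - chet_mat n r c' b') $$ (j+k, j))
      = (\<Sum>j<n-k. if 1 \<le> j \<and> j \<le> n - k - 2 then c k - c' k else 0)"
  proof (rule sum.cong[OF refl])
    fix j assume j: "j \<in> {..<n-k}"
    then have "(chet_mat n r c b - chet_mat n r c' b') $$ (j+k, j)
       = chet_pattern n r c b (j+k+1) (j+1) - chet_pattern n r c' b' (j+k+1) (j+1)"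
      by (auto simp: chet_mat_index)
    also have "\<dots> = (if 1 \<le> j \<and> j \<le> n - k - 2 then c k - c' k else 0)"
      unfolding chet_pattern_def using j k b by auto
    finally show "(chet_mat n r c b - chet_mat n r c' b') $$ (j+k, j) = (if 1 \<le> j \<and> j \<le> n - k - 2 then c k - c' k else 0)" .
  qed
  also have "\<dots> = (\<Sum>j\<in>{1..n-k-2}. c k - c' k)"
    by (rule sum.mono_neutral_cong_right) auto
  also have "\<dots> = real (n - k - 2) * (c k - c' k)" by simp
  finally show ?thesis .
qed


lemma chet_r_pos: "n \<ge> 2 \<Longrightarrow> chet_r n > 0"
  unfolding chet_r_def by auto

lemma b_formula_cong: "(\<And>j. j < d \<Longrightarrow> c j = c' j) \<Longrightarrow> b_formula r c d = b_formula r c' d"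
  unfolding b_formula_def by auto

lemma chet_trace:
  assumes k: "k + 2 < n"
  shows "mtrace (chet n ^\<^sub>m (k+1)) = 1"
proof -
  define r where "r = chet_r n"
  define cl where "cl = chet_cs n k"
  define bT where "bT l = (if l \<le> k then b_formula r (c_of cl) l else 0)" for l
  define T where "T = chet_mat n r (c_of cl) bT"
  define C where "C = chet n"
  have r: "r > 0" unfolding r_def using k by (intro chet_r_pos) auto
  have Tdef: "chet_trunc n cl = T" unfolding chet_trunc_def T_def bT_def cl_def r_def Let_def by simp
  have Cdef: "C = chet_mat n r (chet_c n) (chet_b n)" unfolding C_def chet_def r_def ..
  have cagree: "chet_c n d = c_of cl d" if "d < k" for d
    unfolding chet_c_def cl_def using that k by (intro c_of_chet_cs) auto
  have bagree: "chet_b n d = bT d" if "d \<le> k" for d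
  proof -
    have "chet_b n d = b_formula r (chet_c n) d" unfolding chet_b_def r_def using that k by auto
    also have "\<dots> = b_formula r (c_of cl) d" by (rule b_formula_cong) (use cagree that in auto)
    finally show ?thesis unfolding bT_def using that by simp
  qed
  have CT: "band (C - T) (- int k)" unfolding Cdef T_def
    by (rule chet_mat_diff_band) (use cagree bagree in auto)
  have pert: "mtrace (C ^\<^sub>m (k+1)) = mtrace (T ^\<^sub>m (k+1)) + of_nat (k+1) * mtrace ((C - T) * T ^\<^sub>m k)"
    by (rule trace_perturb[OF _ _ _ _ CT]) (auto simp: Cdef T_def chet_mat_band)
  have sh: "mtrace ((C - T) * T ^\<^sub>m k) = r ^ k * (\<Sum>j<n-k. (C - T) $$ (j+k, j))"
    by (rule trace_shift[of _ n]) (auto simp: Cdef T_def chet_mat_band chet_mat_sd[simplified] CT[unfolded Cdef T_def])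
  have sm: "(\<Sum>j<n-k. (C - T) $$ (j+k, j)) = real (n - k - 2) * (chet_c n k - c_of cl k)"
    unfolding Cdef T_def by (rule chet_mat_diff_sum) (use k bagree in auto)
  have ck: "chet_c n k = c_next n cl"
    unfolding chet_c_def c_of_def cl_def using k by (auto simp: chet_cs_nth)
  have c0: "c_of cl k = 0" unfolding c_of_def cl_def by simp
  have cn: "c_next n cl = (1 - mtrace (T ^\<^sub>m (k+1))) / (real (n - k - 2) * (real k + 1) * r ^ k)"
  proof -
    have rr: "real n - real k - 2 = real (n - k - 2)" using k by (simp add: of_nat_diff)
    show ?thesis unfolding c_next_def Let_def Tdef[symmetric] r_def cl_def chet_cs_length rr ..
  qed
  have nz: "real (n - k - 2) * (real k + 1) * r ^ k \<noteq> 0" using k r by auto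
  have "mtrace (C ^\<^sub>m (k+1)) = mtrace (T ^\<^sub>m (k+1)) + (real k + 1) * r ^ k * real (n - k - 2) * c_next n cl"
    using pert sh sm ck c0 by (simp add: algebra_simps)
  also have "\<dots> = 1"
  proof -
    define X where "X = real (n - k - 2) * (real k + 1) * r ^ k"
    have "(real k + 1) * r ^ k * real (n - k - 2) * c_next n cl = X * c_next n cl" unfolding X_def by simp
    also have "\<dots> = 1 - mtrace (T ^\<^sub>m (k+1))" unfolding cn X_def[symmetric] using nz[folded X_def] by simp
    finally show ?thesis by simp
  qed
  finally show ?thesis unfolding C_def .
qed


lemma sum_c_shift1: "(\<Sum>j\<in>{1..<i+1}. (c::nat\<Rightarrow>real) (i - j)) = (\<Sum>l<i. c l)"
proof -
  have "(\<Sum>j\<in>{1..<i+1}. c (i - j)) = (\<Sum>j\<in>{0..<i}. c (i - (j + 1)))"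
    using sum.shift_bounds_nat_ivl[of "\<lambda>j. c (i - j)" 0 1 i] by simp
  also have "\<dots> = (\<Sum>j<i. c (i - Suc j))" by (simp add: atLeast0LessThan)
  also have "\<dots> = (\<Sum>l<i. c l)" by (rule sum.nat_diff_reindex)
  finally show ?thesis .
qed

lemma chet_row_sum:
  fixes c b :: "nat \<Rightarrow> real"
  assumes n: "n \<ge> 2" and hb: "\<And>l. l \<le> n - 2 \<Longrightarrow> b l = 1 - r - (\<Sum>j<l. c j)"
    and hs: "(\<Sum>l<n. b l) = 1" and i: "i < n"
  shows "(\<Sum>j<n. chet_mat n r c b $$ (i,j)) = 1"
proof (cases "i = n - 1")
  case True
  have "(\<Sum>j<n. chet_mat n r c b $$ (i,j)) = (\<Sum>j<n. b (n - Suc j))"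
    by (rule sum.cong) (use True n in \<open>auto simp: chet_mat_index chet_pattern_def\<close>)
  also have "\<dots> = 1" using hs by (simp add: sum.nat_diff_reindex)
  finally show ?thesis .
next
  case False
  then have i': "i \<le> n - 2" using i by auto
  have "(\<Sum>j<n. chet_mat n r c b $$ (i,j)) =
     (\<Sum>j<n. (if j = 0 then b i else 0) + (if 1 \<le> j \<and> j < i + 1 then c (i - j) else 0) + (if j = i + 1 then r else 0))"
    by (rule sum.cong) (use i' n in \<open>auto simp: chet_mat_index chet_pattern_def\<close>)
  also have "\<dots> = b i + (\<Sum>j\<in>{1..<i+1}. c (i - j)) + r"
  proof -
    have a: "(\<Sum>j<n. (if j = 0 then b i else 0)) = b i" using n by (simp add: sum.delta)
    have b: "(\<Sum>j<n. (if j = i + 1 then r else 0)) = r" using i' n by (simp add: sum.delta)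
    have c: "(\<Sum>j<n. (if 1 \<le> j \<and> j < i + 1 then c (i - j) else 0)) = (\<Sum>j\<in>{1..<i+1}. c (i - j))"
      by (rule sum.mono_neutral_cong_right) (use i' n in auto)
    show ?thesis using a b c by (simp add: sum.distrib)
  qed
  also have "\<dots> = b i + (\<Sum>l<i. c l) + r" by (simp only: sum_c_shift1)
  also have "\<dots> = 1" using hb[OF i'] by simp
  finally show ?thesis .
qed

lemma chet_col_sum:
  fixes c b :: "nat \<Rightarrow> real"
  assumes n: "n \<ge> 2" and hb: "\<And>l. l \<le> n - 2 \<Longrightarrow> b l = 1 - r - (\<Sum>j<l. c j)"
    and hs: "(\<Sum>l<n. b l) = 1" and j: "j < n"
  shows "(\<Sum>i<n. chet_mat n r c b $$ (i,j)) = 1"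
proof (cases "j = 0")
  case True
  have "(\<Sum>i<n. chet_mat n r c b $$ (i,j)) = (\<Sum>i<n. b i)"
    by (rule sum.cong) (use True n in \<open>auto simp: chet_mat_index chet_pattern_def\<close>)
  then show ?thesis using hs by simp
next
  case False
  have "(\<Sum>i<n. chet_mat n r c b $$ (i,j)) =
     (\<Sum>i<n. (if i + 1 = j then r else 0) + (if j \<le> i \<and> i < n - 1 then c (i - j) else 0) + (if i = n - 1 then b (n - 1 - j) else 0))"
    by (rule sum.cong) (use False j n in \<open>auto simp: chet_mat_index chet_pattern_def\<close>)
  also have "\<dots> = r + (\<Sum>i\<in>{j..<n-1}. c (i - j)) + b (n - 1 - j)"
  proof -
    have a: "(\<Sum>i<n. (if i + 1 = j then r else 0)) = r"
    proof -
      have "(\<Sum>i<n. (if i + 1 = j then r else 0)) = (\<Sum>i<n. (if i = j - 1 then r else 0))"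
        by (rule sum.cong) (use False in auto)
      then show ?thesis using j by (simp add: sum.delta)
    qed
    have b: "(\<Sum>i<n. (if i = n - 1 then b (n - 1 - j) else 0)) = b (n - 1 - j)" using n by (simp add: sum.delta)
    have c: "(\<Sum>i<n. (if j \<le> i \<and> i < n - 1 then c (i - j) else 0)) = (\<Sum>i\<in>{j..<n-1}. c (i - j))"
      by (rule sum.mono_neutral_cong_right) (use j n in auto)
    show ?thesis using a b c by (simp add: sum.distrib)
  qed
  also have "(\<Sum>i\<in>{j..<n-1}. c (i - j)) = (\<Sum>l<n-1-j. c l)"
  proof -
    have "(\<Sum>i\<in>{0+j..<(n-1-j)+j}. c (i - j)) = (\<Sum>i\<in>{0..<n-1-j}. c (i + j - j))"
      by (rule sum.shift_bounds_nat_ivl)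
    moreover have "{0+j..<(n-1-j)+j} = {j..<n-1}" using j False by auto
    ultimately show ?thesis by (simp add: atLeast0LessThan)
  qed
  also have "b (n - 1 - j) = 1 - r - (\<Sum>l<n-1-j. c l)" using hb[of "n-1-j"] False by auto
  finally show ?thesis by simp
qed

lemma chet_b_props:
  assumes n: "n \<ge> 2"
  shows "\<And>l. l \<le> n - 2 \<Longrightarrow> chet_b n l = 1 - chet_r n - (\<Sum>j<l. chet_c n j)"
    and "(\<Sum>l<n. chet_b n l) = 1"
proof -
  show "\<And>l. l \<le> n - 2 \<Longrightarrow> chet_b n l = 1 - chet_r n - (\<Sum>j<l. chet_c n j)"
    unfolding chet_b_def b_formula_def by auto
  have "{..<n} = insert (n-1) {..n-2}" using n by auto
  then have "(\<Sum>l<n. chet_b n l) = chet_b n (n-1) + (\<Sum>l\<le>n-2. chet_b n l)" using n by simp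
  also have "(\<Sum>l\<le>n-2. chet_b n l) = (\<Sum>l\<le>n-2. b_formula (chet_r n) (chet_c n) l)"
    unfolding chet_b_def by auto
  also have "chet_b n (n-1) = 1 - (\<Sum>l\<le>n-2. b_formula (chet_r n) (chet_c n) l)"
    unfolding chet_b_def using n by auto
  finally show "(\<Sum>l<n. chet_b n l) = 1" by simp
qed

lemma chet_row: "n \<ge> 2 \<Longrightarrow> i < n \<Longrightarrow> (\<Sum>j<n. chet n $$ (i,j)) = 1"
  unfolding chet_def by (rule chet_row_sum) (use chet_b_props in auto)

lemma chet_col: "n \<ge> 2 \<Longrightarrow> j < n \<Longrightarrow> (\<Sum>i<n. chet n $$ (i,j)) = 1"
  unfolding chet_def by (rule chet_col_sum) (use chet_b_props in auto)


lemma upper_pow: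
  fixes B :: "'a::comm_ring_1 mat"
  assumes B: "B \<in> carrier_mat n n" and ut: "upper_triangular B"
  shows "upper_triangular (B ^\<^sub>m m) \<and> (\<forall>i<n. (B ^\<^sub>m m) $$ (i,i) = B $$ (i,i) ^ m)"
proof (induction m)
  case 0 then show ?case using B by (auto simp: upper_triangular_def)
next
  case (Suc m)
  have Bm: "B ^\<^sub>m m \<in> carrier_mat n n" using B by auto
  have ut': "\<And>i j. i < n \<Longrightarrow> j < i \<Longrightarrow> B $$ (i,j) = 0" using ut B unfolding upper_triangular_def by auto
  have utm: "\<And>i j. i < n \<Longrightarrow> j < i \<Longrightarrow> (B ^\<^sub>m m) $$ (i,j) = 0" using Suc B unfolding upper_triangular_def by auto
  have "upper_triangular (B ^\<^sub>m m * B)"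
    unfolding upper_triangular_def
  proof (intro allI impI)
    fix i j assume i: "i < dim_row (B ^\<^sub>m m * B)" and j: "j < i"
    have i': "i < n" using i B by auto
    have "(B ^\<^sub>m m * B) $$ (i,j) = (\<Sum>l<n. (B ^\<^sub>m m) $$ (i,l) * B $$ (l,j))"
      using i' j by (intro mult_entry[OF Bm B]) auto
    also have "\<dots> = 0"
    proof (rule sum.neutral, intro ballI)
      fix l assume l: "l \<in> {..<n}"
      show "(B ^\<^sub>m m) $$ (i,l) * B $$ (l,j) = 0"
      proof (cases "l < i")
        case True then show ?thesis using utm[OF i' True] by simp
      next
        case False then have "j < l" using j by auto
        then show ?thesis using ut'[of l j] l by simp
      qed
    qed
    finally show "(B ^\<^sub>m m * B) $$ (i,j) = 0" .
  qed
  moreover have "(B ^\<^sub>m m * B) $$ (i,i) = B $$ (i,i) ^ Suc m" if i: "i < n" for i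
  proof -
    have "(B ^\<^sub>m m * B) $$ (i,i) = (\<Sum>l<n. (B ^\<^sub>m m) $$ (i,l) * B $$ (l,i))"
      using i by (intro mult_entry[OF Bm B]) auto
    also have "\<dots> = (B ^\<^sub>m m) $$ (i,i) * B $$ (i,i) + (\<Sum>l\<in>{..<n}-{i}. (B ^\<^sub>m m) $$ (i,l) * B $$ (l,i))"
      by (rule sum.remove) (use i in auto)
    also have "(\<Sum>l\<in>{..<n}-{i}. (B ^\<^sub>m m) $$ (i,l) * B $$ (l,i)) = 0"
    proof (rule sum.neutral, intro ballI)
      fix l assume l: "l \<in> {..<n}-{i}"
      show "(B ^\<^sub>m m) $$ (i,l) * B $$ (l,i) = 0"
      proof (cases "l < i")
        case True then show ?thesis using utm[OF i True] by simp
      next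
        case False then have "i < l" using l by auto
        then show ?thesis using ut'[of l i] l by simp
      qed
    qed
    finally show ?thesis using Suc i by simp
  qed
  ultimately show ?case by simp
qed

lemma trace_sim_pow:
  fixes A B :: "'a::comm_ring_1 mat"
  assumes A: "A \<in> carrier_mat n n" and sim: "similar_mat_wit A B P Q" and ut: "upper_triangular B"
  shows "mtrace (A ^\<^sub>m m) = (\<Sum>i<n. B $$ (i,i) ^ m)"
proof -
  have car: "B \<in> carrier_mat n n" "P \<in> carrier_mat n n" "Q \<in> carrier_mat n n" and QP: "Q * P = 1\<^sub>m n"
    using sim A unfolding similar_mat_wit_def Let_def by auto
  have Bm: "B ^\<^sub>m m \<in> carrier_mat n n" using car by auto
  have "A ^\<^sub>m m = P * B ^\<^sub>m m * Q" by (rule similar_mat_wit_pow_id[OF sim])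
  then have "mtrace (A ^\<^sub>m m) = mtrace (P * (B ^\<^sub>m m * Q))" using car Bm by simp
  also have "\<dots> = mtrace ((B ^\<^sub>m m * Q) * P)" by (rule trace_comm) (use car Bm in auto)
  also have "\<dots> = mtrace (B ^\<^sub>m m * (Q * P))" using assoc_mult_mat[OF Bm car(3) car(2)] by simp
  also have "\<dots> = mtrace (B ^\<^sub>m m)" using QP right_mult_one_mat[OF Bm] by simp
  also have "\<dots> = (\<Sum>i<n. B $$ (i,i) ^ m)" unfolding mtrace_def using upper_pow[OF car(1) ut] car by simp
  finally show ?thesis .
qed

fun mprod :: "'a::comm_ring_1 mat \<Rightarrow> 'a list \<Rightarrow> 'a mat" where
  "mprod A [] = 1\<^sub>m (dim_row A)"
| "mprod A (x # xs) = (A - x \<cdot>\<^sub>m 1\<^sub>m (dim_row A)) * mprod A xs"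

lemma mprod_carrier: "A \<in> carrier_mat n n \<Longrightarrow> mprod A xs \<in> carrier_mat n n"
  by (induction xs) auto

lemma mprod_upper_zero:
  fixes B :: "'a::comm_ring_1 mat"
  assumes B: "B \<in> carrier_mat n n" and ut: "upper_triangular B" and d: "diag_mat B = es"
  shows "mprod B es = 0\<^sub>m n n"
proof -
  have len: "length es = n" using d B unfolding diag_mat_def by auto
  have es: "\<And>i. i < n \<Longrightarrow> es ! i = B $$ (i,i)" using d B unfolding diag_mat_def by auto
  have ut': "\<And>i j. i < n \<Longrightarrow> j < i \<Longrightarrow> B $$ (i,j) = 0" using ut B unfolding upper_triangular_def by auto
  have main: "\<forall>i j. a \<le> i \<longrightarrow> i < n \<longrightarrow> j < n \<longrightarrow> mprod B (drop a es) $$ (i,j) = 0" if "a \<le> n" for a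
    using that
  proof (induction a rule: inc_induct)
    case base then show ?case by auto
  next
    case (step a)
    have dr: "drop a es = es ! a # drop (Suc a) es" using step len by (simp add: Cons_nth_drop_Suc)
    define M where "M = mprod B (drop (Suc a) es)"
    have M: "M \<in> carrier_mat n n" unfolding M_def by (rule mprod_carrier[OF B])
    have X: "B - es ! a \<cdot>\<^sub>m 1\<^sub>m n \<in> carrier_mat n n" using B by auto
    show ?case
    proof (intro allI impI)
      fix i j assume ai: "a \<le> i" and i: "i < n" and j: "j < n"
      have "mprod B (drop a es) $$ (i,j) = ((B - es ! a \<cdot>\<^sub>m 1\<^sub>m n) * M) $$ (i,j)"
        unfolding dr M_def using B by simp
      also have "\<dots> = (\<Sum>l<n. (B - es ! a \<cdot>\<^sub>m 1\<^sub>m n) $$ (i,l) * M $$ (l,j))"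
        by (rule mult_entry[OF X M i j])
      also have "\<dots> = 0"
      proof (rule sum.neutral, intro ballI)
        fix l assume l: "l \<in> {..<n}"
        show "(B - es ! a \<cdot>\<^sub>m 1\<^sub>m n) $$ (i,l) * M $$ (l,j) = 0"
        proof (cases "l < i")
          case True then show ?thesis using ut'[OF i True] B i l by auto
        next
          case False
          show ?thesis
          proof (cases "l = a")
            case True
            then have "l = i" using False ai by auto
            then show ?thesis using True es[OF i] B i by auto
          next
            case False2: False
            then have "Suc a \<le> l" using False ai by auto
            then have "M $$ (l,j) = 0" using step.IH l j unfolding M_def by auto
            then show ?thesis by simp
          qed
        qed
      qed
      finally show "mprod B (drop a es) $$ (i,j) = 0" .
    qed
  qed
  show ?thesis
    using main[of 0] mprod_carrier[OF B, of es] by (intro eq_matI) auto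
qed

lemma sim_step:
  fixes P X Q M :: "'a::comm_ring_1 mat"
  assumes c: "P \<in> carrier_mat n n" "X \<in> carrier_mat n n" "Q \<in> carrier_mat n n" "M \<in> carrier_mat n n"
    and QP: "Q * P = 1\<^sub>m n"
  shows "(P * X * Q) * (P * M * Q) = P * (X * M) * Q"
proof -
  have "(P * X * Q) * (P * M * Q) = P * (X * ((Q * P) * (M * Q)))"
    using c by (simp add: assoc_mult_mat[of _ n n _ n _ n])
  also have "\<dots> = P * (X * (M * Q))" using QP c by simp
  also have "\<dots> = P * (X * M) * Q" using c by (simp add: assoc_mult_mat[of _ n n _ n _ n])
  finally show ?thesis .
qed

lemma mprod_sim:
  fixes A B :: "'a::comm_ring_1 mat"
  assumes A: "A \<in> carrier_mat n n" and sim: "similar_mat_wit A B P Q"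
  shows "mprod A xs = P * mprod B xs * Q"
proof -
  have car: "B \<in> carrier_mat n n" "P \<in> carrier_mat n n" "Q \<in> carrier_mat n n"
    and QP: "Q * P = 1\<^sub>m n" and PQ: "P * Q = 1\<^sub>m n" and AA: "A = P * B * Q"
    using sim A unfolding similar_mat_wit_def Let_def by auto
  show ?thesis
  proof (induction xs)
    case Nil then show ?case using A car PQ by simp
  next
    case (Cons x xs)
    define M where "M = mprod B xs"
    have M: "M \<in> carrier_mat n n" unfolding M_def by (rule mprod_carrier[OF car(1)])
    have I: "1\<^sub>m n \<in> carrier_mat n n" by simp
    have X: "B - x \<cdot>\<^sub>m 1\<^sub>m n \<in> carrier_mat n n" using car by auto
    have "A - x \<cdot>\<^sub>m 1\<^sub>m n = P * (B - x \<cdot>\<^sub>m 1\<^sub>m n) * Q"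
    proof -
      have "P * (B - x \<cdot>\<^sub>m 1\<^sub>m n) * Q = (P * B - P * (x \<cdot>\<^sub>m 1\<^sub>m n)) * Q"
        using car by (simp add: mult_minus_distrib_mat[of _ n n _ n])
      also have "\<dots> = P * B * Q - P * (x \<cdot>\<^sub>m 1\<^sub>m n) * Q"
        using car by (intro minus_mult_distrib_mat[of _ n n]) auto
      also have "P * (x \<cdot>\<^sub>m 1\<^sub>m n) * Q = x \<cdot>\<^sub>m 1\<^sub>m n"
        using car PQ by (simp add: mult_smult_distrib[of _ n n _ n] mult_smult_assoc_mat[of _ n n _ n])
      finally show ?thesis using AA by simp
    qed
    then have "mprod A (x # xs) = (P * (B - x \<cdot>\<^sub>m 1\<^sub>m n) * Q) * (P * M * Q)"
      using A Cons unfolding M_def by simp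
    also have "\<dots> = P * ((B - x \<cdot>\<^sub>m 1\<^sub>m n) * M) * Q"
      by (rule sim_step[OF car(2) X car(3) M QP])
    also have "\<dots> = P * mprod B (x # xs) * Q" using car unfolding M_def by simp
    finally show ?case .
  qed
qed


definition Rp :: "complex list \<Rightarrow> complex poly" where
  "Rp xs = prod_list (map (\<lambda>x. [:1, -x:]) xs)"

definition Sf :: "complex list \<Rightarrow> complex fps" where
  "Sf xs = Abs_fps (\<lambda>j. if j = 0 then 0 else (\<Sum>x\<leftarrow>xs. x ^ j))"

lemma geo_fps: "(1 - fps_const x * fps_X) * Abs_fps (\<lambda>j. if j = 0 then 0 else x ^ j) = fps_const (x::complex) * fps_X"
proof (rule fps_ext)
  fix j
  show "fps_nth ((1 - fps_const x * fps_X) * Abs_fps (\<lambda>j. if j = 0 then 0 else x ^ j)) j = fps_nth (fps_const x * fps_X) j"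
  proof -
    have "(1 - fps_const x * fps_X) * Abs_fps (\<lambda>j. if j = 0 then 0 else x ^ j)
        = Abs_fps (\<lambda>j. if j = 0 then 0 else x ^ j) - fps_const x * (fps_X * Abs_fps (\<lambda>j. if j = 0 then 0 else x ^ j))"
      by (simp add: algebra_simps)
    then show ?thesis
      by (cases j; cases "j - 1") (auto simp: fps_X_mult_nth)
  qed
qed

lemma Sf_cons: "Sf (x # xs) = Abs_fps (\<lambda>j. if j = 0 then 0 else x ^ j) + Sf xs"
  unfolding Sf_def by (rule fps_ext) auto

lemma newton_fps: "fps_X * fps_deriv (fps_of_poly (Rp xs)) = - (fps_of_poly (Rp xs) * Sf xs)"
proof (induction xs)
  case Nil then show ?case unfolding Rp_def Sf_def by (simp add: fps_ext)
next
  case (Cons x xs)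
  define F where "F = fps_of_poly (Rp xs)"
  define L where "L = 1 - fps_const x * fps_X"
  define G where "G = Abs_fps (\<lambda>j. if j = 0 then 0 else x ^ j)"
  have RL: "fps_of_poly (Rp (x # xs)) = L * F"
    unfolding Rp_def F_def L_def by (simp add: fps_of_poly_mult fps_of_poly_pCons algebra_simps fps_const_neg)
  have dL: "fps_deriv L = - fps_const x" unfolding L_def by simp
  have LG: "L * G = fps_const x * fps_X" unfolding L_def G_def by (rule geo_fps)
  have IH: "fps_X * fps_deriv F = - (F * Sf xs)" using Cons unfolding F_def .
  have "fps_X * fps_deriv (L * F) = - fps_const x * fps_X * F + L * (fps_X * fps_deriv F)"
    by (simp add: fps_deriv_mult dL algebra_simps)
  also have "\<dots> = - (L * G) * F - L * F * Sf xs" unfolding IH LG by (simp add: algebra_simps del: fps_const_neg)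
  also have "\<dots> = - (L * F * (G + Sf xs))" by (simp add: algebra_simps)
  finally show ?case unfolding RL Sf_cons G_def[symmetric] .
qed

lemma Rp_coeff_zero:
  assumes ps: "\<And>m. 1 \<le> m \<Longrightarrow> m < N \<Longrightarrow> (\<Sum>x\<leftarrow>xs. x ^ m) = 0"
    and k: "1 \<le> k" "k < N"
  shows "coeff (Rp xs) k = 0"
proof -
  have "fps_nth (fps_X * fps_deriv (fps_of_poly (Rp xs))) k = of_nat k * coeff (Rp xs) k"
    using k by (cases k) auto
  moreover have "fps_nth (fps_of_poly (Rp xs) * Sf xs) k = 0"
    unfolding fps_mult_nth
  proof (rule sum.neutral, intro ballI)
    fix i assume i: "i \<in> {0..k}"
    have "fps_nth (Sf xs) (k - i) = 0"
      unfolding Sf_def using ps[of "k - i"] i k by auto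
    then show "fps_nth (fps_of_poly (Rp xs)) i * fps_nth (Sf xs) (k - i) = 0" by simp
  qed
  ultimately have "of_nat k * coeff (Rp xs) k = 0" using newton_fps[of xs] by (metis add.inverse_neutral fps_neg_nth)
  then show ?thesis using k by simp
qed

lemma degree_Rp: "degree (Rp xs) \<le> length xs"
proof -
  have "degree (Rp xs) \<le> sum_list (map degree (map (\<lambda>x. [:1, -x:]) xs))"
    unfolding Rp_def by (rule degree_prod_list_le)
  also have "\<dots> \<le> sum_list (map (\<lambda>x. 1) xs)"
    by (induction xs) (auto simp: add_mono)
  also have "\<dots> = length xs" by (induction xs) auto
  finally show ?thesis .
qed

lemma poly_Rp: "poly (Rp xs) z = (\<Prod>x\<leftarrow>xs. 1 - x * z)"
  unfolding Rp_def by (induction xs) (auto simp: algebra_simps)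

lemma powersum_zero:
  fixes xs :: "complex list"
  assumes len: "length xs = N" and ps: "\<And>m. 1 \<le> m \<Longrightarrow> m < N \<Longrightarrow> (\<Sum>x\<leftarrow>xs. x ^ m) = 0"
    and pr: "(\<Prod>x\<leftarrow>xs. 1 - x) = 1"
  shows "\<forall>x\<in>set xs. x = 0"
proof -
  have ones: "(\<Prod>x\<leftarrow>ys. (1::complex)) = 1" for ys :: "complex list" by (induction ys) auto
  have c0: "coeff (Rp xs) 0 = 1" using poly_Rp[of xs 0] ones[of xs] by (simp add: poly_0_coeff_0[symmetric])
  have cmid: "coeff (Rp xs) k = 0" if "1 \<le> k" "k < N" for k by (rule Rp_coeff_zero[OF ps that])
  have cbig: "coeff (Rp xs) k = 0" if "k > N" for k
    using degree_Rp[of xs] len that by (intro coeff_eq_0) auto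
  have "poly (Rp xs) 1 = (\<Sum>i\<le>degree (Rp xs). coeff (Rp xs) i)" by (simp add: poly_altdef)
  also have "\<dots> = (\<Sum>i\<le>N. coeff (Rp xs) i)"
    by (rule sum.mono_neutral_left) (use degree_Rp[of xs] len in \<open>auto intro: coeff_eq_0\<close>)
  also have "\<dots> = (\<Sum>i\<le>N. if i = 0 then 1 else if i = N then coeff (Rp xs) N else 0)"
    by (rule sum.cong) (use c0 cmid in auto)
  finally have p1: "poly (Rp xs) 1 = (\<Sum>i\<le>N. if i = 0 then 1 else if i = N then coeff (Rp xs) N else 0)" .
  have cN: "coeff (Rp xs) k = 0" if "k \<ge> 1" for k
  proof (cases "N = 0")
    case True then show ?thesis using cbig that by auto
  next
    case False
    have "(\<Sum>i\<le>N. if i = 0 then 1 else if i = N then coeff (Rp xs) N else 0) = 1 + coeff (Rp xs) N"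
    proof -
      have "(\<Sum>i\<le>N. if i = 0 then 1 else if i = N then coeff (Rp xs) N else 0)
          = (\<Sum>i\<le>N. (if i = 0 then 1 else 0) + (if i = N then coeff (Rp xs) N else 0))"
        by (rule sum.cong) (use False in auto)
      also have "\<dots> = 1 + coeff (Rp xs) N" by (simp add: sum.distrib)
      finally show ?thesis .
    qed
    moreover have "poly (Rp xs) 1 = 1" using pr by (simp add: poly_Rp)
    ultimately have "coeff (Rp xs) N = 0" using p1 by simp
    then show ?thesis using cmid cbig that by (cases "k < N"; cases "k = N") auto
  qed
  have R1: "Rp xs = 1"
  proof (rule poly_eqI)
    fix k show "coeff (Rp xs) k = coeff 1 k"
      using c0 cN[of k] by (cases "k = 0") auto
  qed
  show ?thesis
  proof
    fix x assume x: "x \<in> set xs"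
    show "x = 0"
    proof (rule ccontr)
      assume nz: "x \<noteq> 0"
      have "poly (Rp xs) (1/x) = (\<Prod>y\<leftarrow>xs. 1 - y * (1/x))" by (rule poly_Rp)
      also have "\<dots> = 0" using x nz by (auto simp: prod_list_zero_iff)
      finally show False using R1 by simp
    qed
  qed
qed


lemma sum_single:
  assumes "finite S" "i \<in> S" "\<And>l. l \<in> S \<Longrightarrow> l \<noteq> i \<Longrightarrow> f l = 0"
  shows "sum f S = f i"
proof -
  have "sum f S = f i + sum f (S - {i})" by (rule sum.remove) (use assms in auto)
  also have "sum f (S - {i}) = 0" by (rule sum.neutral) (use assms in auto)
  finally show ?thesis by simp
qed

locale hessA =
  fixes A :: "complex mat" and n :: nat and \<rho> :: complex
  assumes A: "A \<in> carrier_mat n n" and bA: "band A 1"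
    and sd: "\<And>l. l + 1 < n \<Longrightarrow> A $$ (l, l+1) = \<rho>" and rho: "\<rho> \<noteq> 0"
    and rows: "\<And>i. i < n \<Longrightarrow> (\<Sum>j<n. A $$ (i,j)) = 1"
    and cols: "\<And>j. j < n \<Longrightarrow> (\<Sum>i<n. A $$ (i,j)) = 1"
begin

lemma kernel_const:
  assumes G: "G \<in> carrier_mat n n" and z: "(A - 1\<^sub>m n) * G = 0\<^sub>m n n" and j: "j < n"
  shows "i < n \<Longrightarrow> G $$ (i,j) = G $$ (0,j)"
proof -
  define g0 where "g0 = G $$ (0,j)"
  have "i < n \<Longrightarrow> \<forall>l\<le>i. G $$ (l,j) = g0"
  proof (induction i)
  case 0 show ?case unfolding g0_def by simp
next
  case (Suc i)
  then have i: "i + 1 < n" by simp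
  define y where "y l = G $$ (l,j) - g0" for l
  have AI: "A - 1\<^sub>m n \<in> carrier_mat n n" using A by auto
  have e1: "(\<Sum>l<n. (A - 1\<^sub>m n) $$ (i,l) * G $$ (l,j)) = 0"
  proof -
    have "((A - 1\<^sub>m n) * G) $$ (i,j) = 0" using z i j by simp
    moreover have "((A - 1\<^sub>m n) * G) $$ (i,j) = (\<Sum>l<n. (A - 1\<^sub>m n) $$ (i,l) * G $$ (l,j))"
      by (rule mult_entry[OF AI G]) (use i j in auto)
    ultimately show ?thesis by simp
  qed
  have rs: "(\<Sum>l<n. (A - 1\<^sub>m n) $$ (i,l)) = 0"
  proof -
    have "(\<Sum>l<n. (A - 1\<^sub>m n) $$ (i,l)) = (\<Sum>l<n. A $$ (i,l) - (if i = l then 1 else 0))"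
      by (rule sum.cong) (use A i in auto)
    also have "\<dots> = 1 - 1" using rows[of i] i by (simp add: sum_subtractf)
    finally show ?thesis by simp
  qed
  have "(\<Sum>l<n. (A - 1\<^sub>m n) $$ (i,l) * y l) = (\<Sum>l<n. (A - 1\<^sub>m n) $$ (i,l) * G $$ (l,j)) - g0 * (\<Sum>l<n. (A - 1\<^sub>m n) $$ (i,l))"
    unfolding y_def by (simp add: algebra_simps sum_subtractf sum_distrib_left)
  then have "(\<Sum>l<n. (A - 1\<^sub>m n) $$ (i,l) * y l) = 0" using e1 rs by simp
  moreover have "(\<Sum>l<n. (A - 1\<^sub>m n) $$ (i,l) * y l) = (A - 1\<^sub>m n) $$ (i,i+1) * y (i+1)"
  proof (rule sum_single)
    fix l assume l: "l \<in> {..<n}" "l \<noteq> i + 1"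
    show "(A - 1\<^sub>m n) $$ (i,l) * y l = 0"
    proof (cases "l \<le> i")
      case True
      have IH: "\<forall>l\<le>i. G $$ (l,j) = g0" using Suc.IH i by simp
      then have "y l = 0" using True unfolding y_def by simp
      then show ?thesis by simp
    next
      case False then have "l > i + 1" using l by auto
      then show ?thesis using bandD[OF bA A, of i l] A l i by auto
    qed
  qed (use i in auto)
  moreover have "(A - 1\<^sub>m n) $$ (i,i+1) = \<rho>" using sd[OF i] A i by auto
  ultimately have "\<rho> * y (i+1) = 0" by simp
  then have "G $$ (i+1,j) = g0" using rho unfolding y_def by simp
  moreover have "\<forall>l\<le>i. G $$ (l,j) = g0" using Suc.IH i by simp
  ultimately show ?case unfolding le_Suc_eq by (metis Suc_eq_plus1)
qed
  then show "i < n \<Longrightarrow> G $$ (i,j) = G $$ (0,j)" unfolding g0_def by blast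
qed

lemma mprod_colsum:
  "j < n \<Longrightarrow> (\<Sum>i<n. mprod A xs $$ (i,j)) = (\<Prod>x\<leftarrow>xs. 1 - x)"
proof (induction xs arbitrary: j)
  case Nil
  have "(\<Sum>i<n. mprod A [] $$ (i,j)) = (\<Sum>i<n. if i = j then 1 else 0)"
    by (rule sum.cong) (use A Nil in auto)
  then show ?case using Nil by simp
next
  case (Cons x xs)
  define M where "M = mprod A xs"
  have M: "M \<in> carrier_mat n n" unfolding M_def by (rule mprod_carrier[OF A])
  have X: "A - x \<cdot>\<^sub>m 1\<^sub>m n \<in> carrier_mat n n" using A by auto
  have eqm: "mprod A (x # xs) = (A - x \<cdot>\<^sub>m 1\<^sub>m n) * M" unfolding M_def using A by simp
  have "(\<Sum>i<n. mprod A (x # xs) $$ (i,j)) = (\<Sum>i<n. \<Sum>l<n. (A - x \<cdot>\<^sub>m 1\<^sub>m n) $$ (i,l) * M $$ (l,j))"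
  proof (rule sum.cong[OF refl])
    fix i assume i: "i \<in> {..<n}"
    show "mprod A (x # xs) $$ (i,j) = (\<Sum>l<n. (A - x \<cdot>\<^sub>m 1\<^sub>m n) $$ (i,l) * M $$ (l,j))"
      unfolding eqm by (rule mult_entry[OF X M]) (use i Cons.prems in auto)
  qed
  also have "\<dots> = (\<Sum>l<n. (\<Sum>i<n. (A - x \<cdot>\<^sub>m 1\<^sub>m n) $$ (i,l)) * M $$ (l,j))"
    by (subst sum.swap) (simp add: sum_distrib_right)
  also have "\<dots> = (\<Sum>l<n. (1 - x) * M $$ (l,j))"
  proof (rule sum.cong[OF refl])
    fix l assume l: "l \<in> {..<n}"
    have "(\<Sum>i<n. (A - x \<cdot>\<^sub>m 1\<^sub>m n) $$ (i,l)) = (\<Sum>i<n. A $$ (i,l) - (if i = l then x else 0))"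
      by (rule sum.cong) (use A l in auto)
    also have "\<dots> = 1 - x" using cols[of l] l by (simp add: sum_subtractf)
    finally show "(\<Sum>i<n. (A - x \<cdot>\<^sub>m 1\<^sub>m n) $$ (i,l)) * M $$ (l,j) = (1 - x) * M $$ (l,j)" by simp
  qed
  also have "\<dots> = (1 - x) * (\<Prod>x\<leftarrow>xs. 1 - x)"
    using Cons.IH[OF Cons.prems] unfolding M_def by (metis sum_distrib_left)
  finally show ?case by simp
qed

lemma mprod_band:
  "band (mprod A xs) (int (length xs)) \<and> (\<forall>i. i + length xs < n \<longrightarrow> mprod A xs $$ (i, i + length xs) = \<rho> ^ length xs)"
proof (induction xs)
  case Nil
  have "band (1\<^sub>m n :: complex mat) 0" by (rule band_one)
  then show ?case using A by auto
next
  case (Cons x xs)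
  define M where "M = mprod A xs"
  have M: "M \<in> carrier_mat n n" unfolding M_def by (rule mprod_carrier[OF A])
  have X: "A - x \<cdot>\<^sub>m 1\<^sub>m n \<in> carrier_mat n n" using A by auto
  have bX: "band (A - x \<cdot>\<^sub>m 1\<^sub>m n) (int 1)"
    unfolding band_def using bandD[OF bA A] A by auto
  have bM: "band M (int (length xs))" using Cons unfolding M_def by simp
  have eq: "mprod A (x # xs) = (A - x \<cdot>\<^sub>m 1\<^sub>m n) * M" unfolding M_def using A by simp
  have "band ((A - x \<cdot>\<^sub>m 1\<^sub>m n) * M) (int 1 + int (length xs))" by (rule band_mult[OF X M bX bM])
  moreover have "((A - x \<cdot>\<^sub>m 1\<^sub>m n) * M) $$ (i, i + 1 + length xs) = \<rho> ^ Suc (length xs)"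
    if i: "i + 1 + length xs < n" for i
  proof -
    have "((A - x \<cdot>\<^sub>m 1\<^sub>m n) * M) $$ (i, i + 1 + length xs) = (A - x \<cdot>\<^sub>m 1\<^sub>m n) $$ (i, i+1) * M $$ (i + 1, i + 1 + length xs)"
      by (rule band_entry[OF X M bX bM i])
    also have "(A - x \<cdot>\<^sub>m 1\<^sub>m n) $$ (i, i+1) = \<rho>" using sd[of i] A i by auto
    also have "M $$ (i + 1, i + 1 + length xs) = \<rho> ^ length xs"
      using Cons[THEN conjunct2, rule_format, of "i+1"] i unfolding M_def by simp
    finally show ?thesis by simp
  qed
  ultimately show ?case unfolding eq by (simp add: add.commute add.left_commute)
qed

end


lemma chet_r_pow: assumes n: "n \<ge> 2" shows "chet_r n ^ (n - 1) = 1 / real n"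
proof -
  have r: "chet_r n > 0" using chet_r_pos[OF n] .
  have "chet_r n ^ (n - 1) = chet_r n powr real (n - 1)" using r by (simp add: powr_realpow)
  also have "\<dots> = (1 / real n) powr (1 / (real n - 1) * real (n - 1))"
    unfolding chet_r_def by (simp add: powr_powr)
  also have "1 / (real n - 1) * real (n - 1) = 1" using n by (simp add: of_nat_diff)
  finally show ?thesis using n by simp
qed

lemma sum_list_singletons: "(\<Sum>a\<leftarrow>as. {#a#}) = mset as"
  by (induction as) auto

lemma prod_list_perm: "mset xs = mset ys \<Longrightarrow> prod_list (map f xs) = (prod_list (map f ys) :: 'a::comm_monoid_mult)"
  by (metis mset_map prod_mset_prod_list)

lemma proots_lin: "proots (\<Prod>a\<leftarrow>as. [:- a, 1:]) = mset (as :: complex list)"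
proof (induction as)
  case Nil then show ?case by simp
next
  case (Cons a as)
  have nz: "(\<Prod>a\<leftarrow>as. [:- a, 1:]) \<noteq> 0" by (auto simp: prod_list_zero_iff)
  have e: "(\<Prod>a\<leftarrow>a # as. [:- a, 1:]) = [:- a, 1:] * (\<Prod>a\<leftarrow>as. [:- a, 1:])" by simp
  have p: "proots ([:- a, 1:] * (\<Prod>a\<leftarrow>as. [:- a, 1:])) = proots [:- a, 1:] + proots (\<Prod>a\<leftarrow>as. [:- a, 1:])"
    by (rule proots_mult) (use nz in auto)
  have l: "proots [:- a, 1:] = {#a#}" using proots_linear_factor[of "-a"] by simp
  show ?case unfolding e p l Cons.IH by simp
qed

theorem chet_cspec:
  assumes n: "n \<ge> 2"
  shows "cspec (chet n) = add_mset 1 (replicate_mset (n - 1) 0)"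
proof -
  define A where "A = map_mat complex_of_real (chet n)"
  define \<rho> where "\<rho> = complex_of_real (chet_r n)"
  have C: "chet n \<in> carrier_mat n n" unfolding chet_def by simp
  have A: "A \<in> carrier_mat n n" unfolding A_def using C by simp
  have Aij: "A $$ (i,j) = complex_of_real (chet n $$ (i,j))" if "i < n" "j < n" for i j
    unfolding A_def using C that by simp
  interpret hessA A n \<rho>
  proof
    show "A \<in> carrier_mat n n" by (rule A)
    show "band A 1" unfolding band_def
    proof (intro allI impI)
      fix i j assume i: "i < dim_row A" and j: "j < dim_col A" and ij: "1 < int j - int i"
      have i': "i < n" and j': "j < n" using i j A by auto
      have "chet n $$ (i,j) = 0"
        unfolding chet_def by (rule bandD[OF chet_mat_band chet_mat_carrier i' j' ij])
      then show "A $$ (i,j) = 0" using i j A Aij by auto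
    qed
    show "\<And>l. l + 1 < n \<Longrightarrow> A $$ (l, l+1) = \<rho>"
      using Aij chet_mat_sd unfolding \<rho>_def chet_def by auto
    show "\<rho> \<noteq> 0" unfolding \<rho>_def using chet_r_pos[OF n] by simp
    show "\<And>i. i < n \<Longrightarrow> (\<Sum>j<n. A $$ (i,j)) = 1"
    proof -
      fix i assume i: "i < n"
      have "(\<Sum>j<n. A $$ (i,j)) = complex_of_real (\<Sum>j<n. chet n $$ (i,j))"
        by (simp add: Aij i)
      then show "(\<Sum>j<n. A $$ (i,j)) = 1" using chet_row[OF n i] by simp
    qed
    show "\<And>j. j < n \<Longrightarrow> (\<Sum>i<n. A $$ (i,j)) = 1"
    proof -
      fix j assume j: "j < n"
      have "(\<Sum>i<n. A $$ (i,j)) = complex_of_real (\<Sum>i<n. chet n $$ (i,j))"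
        by (simp add: Aij j)
      then show "(\<Sum>i<n. A $$ (i,j)) = 1" using chet_col[OF n j] by simp
    qed
  qed
  have trA: "mtrace (A ^\<^sub>m m) = 1" if m: "1 \<le> m" "m + 1 < n" for m
  proof -
    have "A ^\<^sub>m m = map_mat complex_of_real (chet n ^\<^sub>m m)"
      unfolding A_def by (rule of_real_hom.mat_hom_pow[OF C, symmetric])
    then have "mtrace (A ^\<^sub>m m) = complex_of_real (mtrace (chet n ^\<^sub>m m))"
      unfolding mtrace_def using C by simp
    moreover have "mtrace (chet n ^\<^sub>m (m - 1 + 1)) = 1" by (rule chet_trace) (use m in auto)
    ultimately show ?thesis using m by simp
  qed
  obtain as where cp: "char_poly A = (\<Prod>a\<leftarrow>as. [:- a, 1:])" and las: "length as = n"
    using char_poly_factorized[OF A] by blast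
  have cs: "cspec (chet n) = mset as"
  proof -
    have "cspec (chet n) = proots (\<Prod>a\<leftarrow>as. [:- a, 1:])" unfolding cspec_def A_def[symmetric] cp ..
    also have "\<dots> = mset as" by (rule proots_lin)
    finally show ?thesis .
  qed
  have one: "1 \<in> set as"
  proof -
    define v1 where "v1 = vec n (\<lambda>_. 1::complex)"
    have "eigenvector A v1 1"
      unfolding eigenvector_def
    proof (intro conjI)
      show "v1 \<in> carrier_vec (dim_row A)" using A unfolding v1_def by simp
      have "v1 $ 0 \<noteq> 0\<^sub>v n $ 0" using n unfolding v1_def by simp
      then show "v1 \<noteq> 0\<^sub>v (dim_row A)" using A by auto
      show "A *\<^sub>v v1 = 1 \<cdot>\<^sub>v v1"
      proof (rule eq_vecI)
        fix i assume i: "i < dim_vec (1 \<cdot>\<^sub>v v1)"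
        then have i': "i < n" unfolding v1_def by simp
        have "(A *\<^sub>v v1) $ i = row A i \<bullet> v1" using A i' by simp
        also have "\<dots> = (\<Sum>j<n. A $$ (i,j))" using A i' unfolding v1_def by (simp add: scalar_prod_def lessThan_atLeast0)
        also have "\<dots> = 1" by (rule rows[OF i'])
        finally show "(A *\<^sub>v v1) $ i = (1 \<cdot>\<^sub>v v1) $ i" using i' unfolding v1_def by simp
      qed (use A in \<open>simp add: v1_def\<close>)
    qed
    then have "eigenvalue A 1" unfolding eigenvalue_def by blast
    then have "poly (char_poly A) 1 = 0" using eigenvalue_root_char_poly[OF A] by simp
    then have "(\<Prod>a\<leftarrow>as. 1 - a) = 0" unfolding cp by (simp add: poly_prod_list comp_def)
    then show ?thesis by (auto simp: prod_list_zero_iff)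
  qed
  define xs where "xs = remove1 1 as"
  define es where "es = 1 # xs"
  have mes: "mset es = mset as" unfolding es_def xs_def using one by simp
  have les: "length es = n" using mes las by (metis size_mset)
  have lxs: "length xs = n - 1" using les unfolding es_def by simp
  have cp': "char_poly A = (\<Prod>e\<leftarrow>es. [:- e, 1:])" unfolding cp by (rule prod_list_perm[OF mes[symmetric]])
  obtain B P Q where sd: "schur_decomposition A es = (B,P,Q)" by (cases "schur_decomposition A es") auto
  from schur_decomposition[OF A cp' sd]
  have sim: "similar_mat_wit A B P Q" and ut: "upper_triangular B" and dg: "diag_mat B = es" by auto
  have B: "B \<in> carrier_mat n n" using sim A unfolding similar_mat_wit_def Let_def by auto
  have Bii: "B $$ (i,i) = es ! i" if "i < n" for i using dg B that unfolding diag_mat_def by auto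
  have ps: "(\<Sum>x\<leftarrow>xs. x ^ m) = 0" if m: "1 \<le> m" "m < n - 1" for m
  proof -
    have "1 = mtrace (A ^\<^sub>m m)" using trA[of m] m by simp
    also have "\<dots> = (\<Sum>i<n. B $$ (i,i) ^ m)" by (rule trace_sim_pow[OF A sim ut])
    also have "\<dots> = (\<Sum>i<n. es ! i ^ m)" by (simp add: Bii)
    also have "\<dots> = sum_list (map (\<lambda>e. e ^ m) es)"
      by (simp add: sum_list_sum_nth les lessThan_atLeast0)
    also have "\<dots> = 1 + (\<Sum>x\<leftarrow>xs. x ^ m)" unfolding es_def by simp
    finally show ?thesis by simp
  qed
  define G where "G = mprod A xs"
  have G: "G \<in> carrier_mat n n" unfolding G_def by (rule mprod_carrier[OF A])
  have z: "(A - 1\<^sub>m n) * G = 0\<^sub>m n n"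
  proof -
    have "mprod B es = 0\<^sub>m n n" by (rule mprod_upper_zero[OF B ut dg])
    then have "mprod A es = P * 0\<^sub>m n n * Q" using mprod_sim[OF A sim] by simp
    also have "\<dots> = 0\<^sub>m n n" using sim A unfolding similar_mat_wit_def Let_def by auto
    finally have "mprod A es = 0\<^sub>m n n" .
    moreover have "mprod A es = (A - 1\<^sub>m n) * G"
    proof -
      have "(1::complex) \<cdot>\<^sub>m 1\<^sub>m n = 1\<^sub>m n" by (rule eq_matI) auto
      then show ?thesis unfolding es_def G_def using A by simp
    qed
    ultimately show ?thesis by simp
  qed
  have n1: "n - 1 < n" using n by simp
  have "(\<Prod>x\<leftarrow>xs. 1 - x) = (\<Sum>i<n. G $$ (i, n-1))" unfolding G_def by (rule mprod_colsum[OF n1, symmetric])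
  also have "\<dots> = (\<Sum>i<n. G $$ (0, n-1))" 
  proof (rule sum.cong[OF refl])
    fix i assume "i \<in> {..<n}"
    then show "G $$ (i, n-1) = G $$ (0, n-1)" by (intro kernel_const[OF G z n1]) simp
  qed
  also have "\<dots> = of_nat n * G $$ (0, 0 + length xs)" using lxs by simp
  also have "G $$ (0, 0 + length xs) = \<rho> ^ (n - 1)"
    using mprod_band[of xs, THEN conjunct2, rule_format, of 0] lxs n unfolding G_def by simp
  also have "\<rho> ^ (n - 1) = complex_of_real (1 / real n)" unfolding \<rho>_def using chet_r_pow[OF n] by (metis of_real_power)
  finally have pr: "(\<Prod>x\<leftarrow>xs. 1 - x) = 1" using n by simp
  have "\<forall>x\<in>set xs. x = 0" by (rule powersum_zero[OF lxs ps pr]) auto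
  then have "xs = replicate (n - 1) 0" using lxs by (metis replicate_length_same)
  then show ?thesis using cs mes unfolding es_def by simp
qed

theorem chet_gap:
  assumes n: "n \<ge> 2"
  shows "spectral_gap (chet n) = 1"
proof -
  have s1: "set_mset (cspec (chet n)) = {1, 0}" using n by (simp add: chet_cspec)
  have l1: "lambda1 (chet n) = 1" unfolding lambda1_def s1 by simp
  have s2: "set_mset (cspec (chet n) - {# complex_of_real (lambda1 (chet n)) #}) = {0}"
    using n by (simp add: chet_cspec l1)
  have "re_lambda2 (chet n) = 0" unfolding re_lambda2_def s2 by simp
  then show ?thesis unfolding spectral_gap_def l1 by simp
qed


lemma sum1n: "(\<Sum>j\<in>{1..n::nat}. g (j - 1)) = (\<Sum>j<n. (g j :: 'a::comm_monoid_add))"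
  by (induction n) (auto simp: atLeastAtMostSuc_conv add.commute)

lemma e_bound: assumes k: "k \<ge> 2" shows "(1 + 1 / real k) ^ k \<le> real k + 1"
proof -
  have "(1 + 1 / real k) ^ k \<le> exp (1 / real k) ^ k"
    by (rule power_mono) (auto simp: exp_ge_add_one_self add.commute)
  also have "\<dots> = exp (real k * (1 / real k))" by (rule exp_of_nat_mult[symmetric])
  also have "\<dots> = exp 1" using k by simp
  also have "\<dots> \<le> 3" by (rule exp_le)
  also have "\<dots> \<le> real k + 1" using k by simp
  finally show ?thesis .
qed

lemma r_le: assumes n: "n \<ge> 2" shows "chet_r n \<le> 1"
proof -
  have m: "n - 1 = Suc (n - 2)" using n by simp
  have "chet_r n ^ (n - 1) = 1 / real n" by (rule chet_r_pow[OF n])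
  also have "\<dots> \<le> 1" using n by simp
  finally have "chet_r n ^ Suc (n - 2) \<le> 1 ^ Suc (n - 2)" unfolding m by simp
  then show ?thesis by (rule power_le_imp_le_base) simp
qed

lemma r_le_odd: assumes h: "h \<ge> 1" and n: "n = 2 * h + 1"
  shows "chet_r n \<le> 2 * real h / (2 * real h + 1)"
proof -
  have n2: "n \<ge> 2" using h n by simp
  define k where "k = 2 * h"
  have k: "k \<ge> 2" using h unfolding k_def by simp
  have "chet_r n ^ k = 1 / (real k + 1)" using chet_r_pow[OF n2] n unfolding k_def by simp
  also have "\<dots> \<le> (real k / (real k + 1)) ^ k"
  proof -
    have "(1 + 1 / real k) ^ k \<le> real k + 1" by (rule e_bound[OF k])
    moreover have "1 + 1 / real k = (real k + 1) / real k" using k by (simp add: field_simps)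
    ultimately have "((real k + 1) / real k) ^ k \<le> real k + 1" by simp
    then have "1 / (real k + 1) \<le> 1 / ((real k + 1) / real k) ^ k"
      using k by (intro divide_left_mono) auto
    also have "1 / ((real k + 1) / real k) ^ k = (real k / (real k + 1)) ^ k"
      by (simp add: power_divide)
    finally show ?thesis .
  qed
  finally have "chet_r n ^ k \<le> (real k / (real k + 1)) ^ k" .
  then have "chet_r n \<le> real k / (real k + 1)"
  proof -
    obtain m where m: "k = Suc m" using k by (cases k) auto
    show ?thesis using \<open>chet_r n ^ k \<le> (real k / (real k + 1)) ^ k\<close> unfolding m
      by (rule power_le_imp_le_base) simp
  qed
  then show ?thesis unfolding k_def by simp
qed

lemma phi_bound:
  assumes n: "n \<ge> 2"
  shows "phi (chet n) \<le> 2 / real n"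
proof -
  define h where "h = n div 2"
  define r where "r = chet_r n"
  have h1: "h \<ge> 1" and hn: "h < n" using n unfolding h_def by auto
  have C: "chet n \<in> carrier_mat n n" unfolding chet_def by simp
  define f where "f S = (\<Sum>i\<in>S. \<Sum>j\<in>{1..n} - S. chet n $$ (i-1, j-1)) / real (card S)" for S
  define F where "F = {S. S \<subseteq> {1..n} \<and> S \<noteq> {} \<and> real (card S) \<le> real n / 2}"
  have ph: "phi (chet n) = Min (f ` F)" unfolding phi_def f_def F_def using C by simp
  have S0: "{1..h} \<in> F" unfolding F_def h_def using n by auto
  have fin: "finite F" unfolding F_def by (rule finite_subset[of _ "Pow {1..n}"]) auto
  have "phi (chet n) \<le> f {1..h}" unfolding ph by (rule Min_le) (use fin S0 in auto)
  also have "f {1..h} = r / real h"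
  proof -
    have "(\<Sum>i\<in>{1..h}. \<Sum>j\<in>{1..n} - {1..h}. chet n $$ (i-1, j-1)) = (\<Sum>i\<in>{1..h}. if i = h then r else 0)"
    proof (rule sum.cong[OF refl])
      fix i assume i: "i \<in> {1..h}"
      have "(\<Sum>j\<in>{1..n} - {1..h}. chet n $$ (i-1, j-1)) = (\<Sum>j\<in>{1..n} - {1..h}. if j = i + 1 then r else 0)"
      proof (rule sum.cong[OF refl])
        fix j assume j: "j \<in> {1..n} - {1..h}"
        have "chet n $$ (i-1, j-1) = chet_pattern n r (chet_c n) (chet_b n) i j"
          unfolding chet_def r_def using i j hn by (subst chet_mat_index) auto
        also have "\<dots> = (if j = i + 1 then r else 0)"
          unfolding chet_pattern_def using i j hn by auto
        finally show "chet n $$ (i-1, j-1) = (if j = i + 1 then r else 0)" .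
      qed
      also have "\<dots> = (if i = h then r else 0)"
      proof (cases "i = h")
        case True
        then show ?thesis using hn by (simp add: sum.delta)
      next
        case False
        then have ni: "i + 1 \<notin> {1..n} - {1..h}" using i by auto
        have "(\<Sum>j\<in>{1..n} - {1..h}. if j = i + 1 then r else 0) = 0"
          by (rule sum.neutral) (use ni in auto)
        then show ?thesis using False by simp
      qed
      finally show "(\<Sum>j\<in>{1..n} - {1..h}. chet n $$ (i-1, j-1)) = (if i = h then r else 0)" .
    qed
    also have "\<dots> = r" using h1 by (simp add: sum.delta)
    finally show ?thesis unfolding f_def by simp
  qed
  also have "r / real h \<le> 2 / real n"
  proof (cases "even n")
    case True
    then have "real n = 2 * real h" unfolding h_def by auto
    then show ?thesis using r_le[OF n] h1 unfolding r_def by (simp add: field_simps)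
  next
    case False
    then have nn: "n = 2 * h + 1" unfolding h_def by presburger
    have "r \<le> 2 * real h / (2 * real h + 1)" unfolding r_def by (rule r_le_odd[OF h1 nn])
    then show ?thesis using h1 nn by (simp add: field_simps)
  qed
  finally show ?thesis .
qed

theorem theorem1p3:
  fixes n :: nat
  assumes "n \<ge> 2"
  shows "(\<forall>i\<in>{1..n}. (\<Sum>j\<in>{1..n}. chet n $$ (i-1, j-1)) = 1)
       \<and> (\<forall>j\<in>{1..n}. (\<Sum>i\<in>{1..n}. chet n $$ (i-1, j-1)) = 1)
       \<and> phi (chet n) \<le> 2 * spectral_gap (chet n) / real n"
proof (intro conjI ballI)
  fix i assume i: "i \<in> {1..n}"
  show "(\<Sum>j\<in>{1..n}. chet n $$ (i-1, j-1)) = 1"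
    using sum1n[of "\<lambda>j. chet n $$ (i-1, j)" n] chet_row[OF assms, of "i-1"] i by auto
next
  fix j assume j: "j \<in> {1..n}"
  show "(\<Sum>i\<in>{1..n}. chet n $$ (i-1, j-1)) = 1"
    using sum1n[of "\<lambda>i. chet n $$ (i, j-1)" n] chet_col[OF assms, of "j-1"] j by auto
next
  show "phi (chet n) \<le> 2 * spectral_gap (chet n) / real n"
    using phi_bound[OF assms] chet_gap[OF assms] by simp
qed


end
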